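(* Every (fork, banner)-free graph $G$ satisfies $\chi(G)\le\omega(G)^2$.
   Context: All graphs are finite and simple; $\chi$ is chromatic number, $\omega$ clique number. The fork is obtained from $K_{1,3}$ by subdividing one edge once. The banner is a $4$-cycle with one pendant vertex attached. $G$ is $(H_1,H_2)$-free if it has no induced subgraph isomorphic to $H_1$ or $H_2$. *)

theory Defs
  imports Main
begin

definition simple_graph :: "'a set \<Rightarrow> ('a \<Rightarrow> 'a \<Rightarrow> bool) \<Rightarrow> bool" where
  "simple_graph V E \<longleftrightarrow> finite V \<and> (\<forall>x\<in>V. \<forall>y\<in>V. E x y \<longleftrightarrow> E y x) \<and> (\<forall>x\<in>V. \<not> E x x)"

definition induced_subgraph_iso ::
  "'b set \<Rightarrow> ('b \<Rightarrow> 'b \<Rightarrow> bool) \<Rightarrow> 'a set \<Rightarrow> ('a \<Rightarrow> 'a \<Rightarrow> bool) \<Rightarrow> bool" where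
  "induced_subgraph_iso VH EH V E \<longleftrightarrow>
     (\<exists>f. inj_on f VH \<and> f ` VH \<subseteq> V \<and>
          (\<forall>x\<in>VH. \<forall>y\<in>VH. E (f x) (f y) \<longleftrightarrow> EH x y))"

definition H_free :: "'b set \<Rightarrow> ('b \<Rightarrow> 'b \<Rightarrow> bool) \<Rightarrow> 'a set \<Rightarrow> ('a \<Rightarrow> 'a \<Rightarrow> bool) \<Rightarrow> bool" where
  "H_free VH EH V E \<longleftrightarrow> \<not> induced_subgraph_iso VH EH V E"

text \<open>Fork: K_{1,3} with centre 0 and leaves 1,2,3, edge 0-3 subdivided by vertex 4.\<close>

definition fork_edges :: "nat \<Rightarrow> nat \<Rightarrow> bool" where
  "fork_edges x y \<longleftrightarrow> {x, y} \<in> {{0,1}, {0,2}, {0,4}, {4,3}}"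

text \<open>Banner: 4-cycle 0-1-2-3-0 with pendant vertex 4 attached to 0.\<close>

definition banner_edges :: "nat \<Rightarrow> nat \<Rightarrow> bool" where
  "banner_edges x y \<longleftrightarrow> {x, y} \<in> {{0,1}, {1,2}, {2,3}, {3,0}, {0,4}}"

definition small_vertices :: "nat set" where
  "small_vertices = {0..4}"

definition proper_colouring :: "'a set \<Rightarrow> ('a \<Rightarrow> 'a \<Rightarrow> bool) \<Rightarrow> nat \<Rightarrow> ('a \<Rightarrow> nat) \<Rightarrow> bool" where
  "proper_colouring V E k c \<longleftrightarrow>
     (\<forall>x\<in>V. c x < k) \<and> (\<forall>x\<in>V. \<forall>y\<in>V. E x y \<longrightarrow> c x \<noteq> c y)"

definition chromatic_number :: "'a set \<Rightarrow> ('a \<Rightarrow> 'a \<Rightarrow> bool) \<Rightarrow> nat" where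
  "chromatic_number V E = (LEAST k. \<exists>c. proper_colouring V E k c)"

definition is_clique :: "'a set \<Rightarrow> ('a \<Rightarrow> 'a \<Rightarrow> bool) \<Rightarrow> 'a set \<Rightarrow> bool" where
  "is_clique V E K \<longleftrightarrow> K \<subseteq> V \<and> (\<forall>x\<in>K. \<forall>y\<in>K. x \<noteq> y \<longrightarrow> E x y)"

definition clique_number :: "'a set \<Rightarrow> ('a \<Rightarrow> 'a \<Rightarrow> bool) \<Rightarrow> nat" where
  "clique_number V E = Max (card ` {K. is_clique V E K})"

end

theory Submission imports Defs begin

locale fb =
  fixes V :: "'a set" and E :: "'a \<Rightarrow> 'a \<Rightarrow> bool"
  assumes fin: "finite V"
    and sym: "\<And>x y. x \<in> V \<Longrightarrow> y \<in> V \<Longrightarrow> E x y \<longleftrightarrow> E y x"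
    and irr: "\<And>x. x \<in> V \<Longrightarrow> \<not> E x x"
    and nofork: "H_free small_vertices fork_edges V E"
    and noban: "H_free small_vertices banner_edges V E"
begin

lemma sv: "small_vertices = {0,1,2,3,4}" unfolding small_vertices_def by auto

lemma fork_False:
  assumes "a0 \<in> V" "a1 \<in> V" "a2 \<in> V" "a3 \<in> V" "a4 \<in> V"
    and "distinct [a0,a1,a2,a3,a4]"
    and "E a0 a1" "E a0 a2" "E a0 a4" "E a4 a3"
    and "\<not> E a0 a3" "\<not> E a1 a2" "\<not> E a1 a3" "\<not> E a1 a4" "\<not> E a2 a3" "\<not> E a2 a4"
  shows False
proof -
  define f where "f = (\<lambda>i::nat. if i = 0 then a0 else if i = 1 then a1 else if i = 2 then a2 else if i = 3 then a3 else a4)"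
  have e: "\<And>x y. x \<in> V \<Longrightarrow> y \<in> V \<Longrightarrow> E x y \<longleftrightarrow> E y x" by (rule sym)
  have "induced_subgraph_iso small_vertices fork_edges V E"
    unfolding induced_subgraph_iso_def sv
    apply (rule exI[of _ f])
    using assms irr e[of a0 a1] e[of a0 a2] e[of a0 a3] e[of a0 a4] e[of a1 a2] e[of a1 a3] e[of a1 a4]
       e[of a2 a3] e[of a2 a4] e[of a3 a4]
    by (auto simp: f_def fork_edges_def inj_on_def doubleton_eq_iff)
  with nofork show False unfolding H_free_def by simp
qed

lemma banner_False:
  assumes "a0 \<in> V" "a1 \<in> V" "a2 \<in> V" "a3 \<in> V" "a4 \<in> V"
    and "distinct [a0,a1,a2,a3,a4]"
    and "E a0 a1" "E a1 a2" "E a2 a3" "E a3 a0" "E a0 a4"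
    and "\<not> E a0 a2" "\<not> E a1 a3" "\<not> E a1 a4" "\<not> E a2 a4" "\<not> E a3 a4"
  shows False
proof -
  define f where "f = (\<lambda>i::nat. if i = 0 then a0 else if i = 1 then a1 else if i = 2 then a2 else if i = 3 then a3 else a4)"
  have e: "\<And>x y. x \<in> V \<Longrightarrow> y \<in> V \<Longrightarrow> E x y \<longleftrightarrow> E y x" by (rule sym)
  have "induced_subgraph_iso small_vertices banner_edges V E"
    unfolding induced_subgraph_iso_def sv
    apply (rule exI[of _ f])
    using assms irr e[of a0 a1] e[of a0 a2] e[of a0 a3] e[of a0 a4] e[of a1 a2] e[of a1 a3] e[of a1 a4]
       e[of a2 a3] e[of a2 a4] e[of a3 a4]
    by (auto simp: f_def banner_edges_def inj_on_def doubleton_eq_iff)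
  with noban show False unfolding H_free_def by simp
qed

abbreviation om where "om W \<equiv> clique_number W E"

lemma cl_fin: "W \<subseteq> V \<Longrightarrow> finite {K. is_clique W E K}"
  by (rule finite_subset[of _ "Pow W"]) (auto simp: is_clique_def intro: finite_subset[OF _ fin])

lemma cl_le: "W \<subseteq> V \<Longrightarrow> is_clique W E K \<Longrightarrow> card K \<le> om W"
  unfolding clique_number_def using cl_fin by (auto intro!: Max_ge)

lemma cl_ex: "W \<subseteq> V \<Longrightarrow> \<exists>K. is_clique W E K \<and> card K = om W"
proof -
  assume W: "W \<subseteq> V"
  have "{} \<in> {K. is_clique W E K}" by (simp add: is_clique_def)
  then have "om W \<in> card ` {K. is_clique W E K}"
    unfolding clique_number_def using cl_fin[OF W] by (intro Max_in) auto
  then show ?thesis by auto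
qed

lemma om_mono: "W \<subseteq> W' \<Longrightarrow> W' \<subseteq> V \<Longrightarrow> om W \<le> om W'"
proof -
  assume a: "W \<subseteq> W'" "W' \<subseteq> V"
  obtain K where K: "is_clique W E K" "card K = om W" using cl_ex a by blast
  have "is_clique W' E K" using K(1) a unfolding is_clique_def by auto
  then show ?thesis using cl_le[OF a(2)] K by (metis)
qed

lemma ramsey:
  "X \<subseteq> V \<Longrightarrow> (\<forall>x\<in>X. \<forall>y\<in>X. \<forall>z\<in>X. x \<noteq> y \<longrightarrow> y \<noteq> z \<longrightarrow> x \<noteq> z \<longrightarrow> E x y \<or> E y z \<or> E x z)
   \<Longrightarrow> (\<forall>K\<subseteq>X. (\<forall>x\<in>K. \<forall>y\<in>K. x \<noteq> y \<longrightarrow> E x y) \<longrightarrow> card K \<le> k) \<Longrightarrow> card X \<le> k*k + 2*k"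
proof (induction k arbitrary: X)
  case 0
  have "X = {}"
  proof (rule ccontr)
    assume "X \<noteq> {}" then obtain u where "u \<in> X" by auto
    then have "{u} \<subseteq> X" by auto
    moreover have "\<forall>x\<in>{u}. \<forall>y\<in>{u}. x \<noteq> y \<longrightarrow> E x y" by auto
    ultimately have "card {u} \<le> 0" using "0.prems"(3) by blast
    then show False by simp
  qed
  then show ?case by simp
next
  case (Suc k)
  show ?case
  proof (cases "X = {}")
    case True then show ?thesis by simp
  next
    case False
    then obtain u where u: "u \<in> X" by auto
    have finX: "finite X" using Suc.prems(1) fin finite_subset by blast
    define Y where "Y = {y\<in>X. E u y}"
    define Z where "Z = X - {u} - Y"
    have XU: "X \<subseteq> insert u (Y \<union> Z)" unfolding Y_def Z_def by auto
    have uV: "u \<in> V" using u Suc.prems(1) by auto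
    have cY: "card Y \<le> k*k + 2*k"
    proof (rule Suc.IH)
      show "Y \<subseteq> V" using Suc.prems(1) unfolding Y_def by auto
      show "\<forall>x\<in>Y. \<forall>y\<in>Y. \<forall>z\<in>Y. x \<noteq> y \<longrightarrow> y \<noteq> z \<longrightarrow> x \<noteq> z \<longrightarrow> E x y \<or> E y z \<or> E x z"
        using Suc.prems(2) unfolding Y_def by auto
      show "\<forall>K\<subseteq>Y. (\<forall>x\<in>K. \<forall>y\<in>K. x \<noteq> y \<longrightarrow> E x y) \<longrightarrow> card K \<le> k"
      proof (intro allI impI)
        fix K assume K: "K \<subseteq> Y" "\<forall>x\<in>K. \<forall>y\<in>K. x \<noteq> y \<longrightarrow> E x y"
        have uK: "u \<notin> K" using K(1) irr[OF uV] unfolding Y_def by auto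
        have "insert u K \<subseteq> X" using K(1) u unfolding Y_def by auto
        moreover have "\<forall>x\<in>insert u K. \<forall>y\<in>insert u K. x \<noteq> y \<longrightarrow> E x y"
        proof (intro ballI impI)
          fix x y assume xy: "x \<in> insert u K" "y \<in> insert u K" "x \<noteq> y"
          show "E x y"
          proof (cases "x = u")
            case True then show ?thesis using xy K(1) unfolding Y_def by auto
          next
            case xu: False
            show ?thesis
            proof (cases "y = u")
              case True
              have "x \<in> Y" using xy xu K(1) by auto
              then have "E u x" "x \<in> V" using Suc.prems(1) unfolding Y_def by auto
              then show ?thesis using True sym[OF uV] by auto
            next
              case False then show ?thesis using xy xu K(2) by auto
            qed
          qed
        qed
        ultimately have "card (insert u K) \<le> Suc k" using Suc.prems(3) by blast
        moreover have "finite K" using K(1) finX unfolding Y_def by (auto intro: finite_subset)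
        ultimately show "card K \<le> k" using uK by simp
      qed
    qed
    have cZ: "card Z \<le> Suc k"
    proof -
      have "Z \<subseteq> X" unfolding Z_def by auto
      moreover have "\<forall>x\<in>Z. \<forall>y\<in>Z. x \<noteq> y \<longrightarrow> E x y"
      proof (intro ballI impI)
        fix x y assume xy: "x \<in> Z" "y \<in> Z" "x \<noteq> y"
        then have "x \<in> X" "y \<in> X" "x \<noteq> u" "y \<noteq> u" "\<not> E u x" "\<not> E u y" unfolding Z_def Y_def by auto
        moreover have "x \<in> V" using \<open>x \<in> X\<close> Suc.prems(1) by auto
        moreover have "y \<in> V" using \<open>y \<in> X\<close> Suc.prems(1) by auto
        moreover have "E u x \<or> E x y \<or> E u y" using Suc.prems(2)[rule_format, OF u \<open>x \<in> X\<close> \<open>y \<in> X\<close>] \<open>x \<noteq> u\<close> \<open>y \<noteq> u\<close> xy(3)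
          by auto
        ultimately show "E x y" by auto
      qed
      ultimately show ?thesis using Suc.prems(3) by blast
    qed
    have "card X \<le> card (insert u (Y \<union> Z))" using XU finX
      by (intro card_mono) (auto simp: Y_def Z_def)
    also have "\<dots> \<le> Suc (card (Y \<union> Z))" by (simp add: card_insert_le_m1)
    also have "\<dots> \<le> Suc (card Y + card Z)" by (simp add: card_Un_le)
    also have "\<dots> \<le> Suc k * Suc k + 2 * Suc k" using cY cZ by simp
    finally show ?thesis .
  qed
qed

lemma three_other: "finite S \<Longrightarrow> 3 \<le> card S \<Longrightarrow> \<exists>s\<in>S. s \<noteq> a \<and> s \<noteq> b"
proof (rule ccontr)
  assume a: "finite S" "3 \<le> card S" "\<not> (\<exists>s\<in>S. s \<noteq> a \<and> s \<noteq> b)"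
  then have "S \<subseteq> {a, b}" by auto
  then have "card S \<le> card {a,b}" by (intro card_mono) auto
  also have "\<dots> \<le> 2" by (simp add: card_insert_if)
  finally show False using a by simp
qed

lemma struct_lemma:
  assumes W: "W \<subseteq> V" "W \<noteq> {}"
    and deg: "\<forall>v\<in>W. om W ^ 2 \<le> card {y\<in>W. E v y}"
    and nosplit: "\<not> (\<exists>A. A \<subseteq> W \<and> A \<noteq> {} \<and> A \<noteq> W \<and> (\<forall>x\<in>A. \<forall>y\<in>W-A. \<not> E x y))"
    and nojoin: "\<not> (\<exists>A. A \<subseteq> W \<and> A \<noteq> {} \<and> A \<noteq> W \<and> (\<forall>x\<in>A. \<forall>y\<in>W-A. E x y))"
  shows False
proof -
  have finW: "finite W" using W fin finite_subset by blast
  have symW: "\<And>x y. x \<in> W \<Longrightarrow> y \<in> W \<Longrightarrow> E x y \<longleftrightarrow> E y x" using sym W by auto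
  have irrW: "\<And>x. x \<in> W \<Longrightarrow> \<not> E x x" using irr W by auto
  obtain v0 where v0: "v0 \<in> W" using W by auto
  have om1: "1 \<le> om W"
  proof -
    have "is_clique W E {v0}" using v0 unfolding is_clique_def by auto
    then show ?thesis using cl_le[OF W(1)] by fastforce
  qed
  define P where "P = (\<lambda>S. S \<subseteq> W \<and> (\<forall>x\<in>S. \<forall>y\<in>S. \<not> E x y) \<and> (\<exists>v\<in>W. \<forall>s\<in>S. E v s))"
  have "\<exists>x\<in>{y\<in>W. E v0 y}. \<exists>y\<in>{y\<in>W. E v0 y}. \<exists>z\<in>{y\<in>W. E v0 y}. x \<noteq> y \<and> y \<noteq> z \<and> x \<noteq> z \<and> \<not> E x y \<and> \<not> E y z \<and> \<not> E x z"
  proof (rule ccontr)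
    assume na: "\<not> ?thesis"
    let ?X = "{y\<in>W. E v0 y}"
    have "card ?X \<le> (om W - 1) * (om W - 1) + 2 * (om W - 1)"
    proof (rule ramsey)
      show "?X \<subseteq> V" using W by auto
      show "\<forall>x\<in>?X. \<forall>y\<in>?X. \<forall>z\<in>?X. x \<noteq> y \<longrightarrow> y \<noteq> z \<longrightarrow> x \<noteq> z \<longrightarrow> E x y \<or> E y z \<or> E x z"
        using na by blast
      show "\<forall>K\<subseteq>?X. (\<forall>x\<in>K. \<forall>y\<in>K. x \<noteq> y \<longrightarrow> E x y) \<longrightarrow> card K \<le> om W - 1"
      proof (intro allI impI)
        fix K assume K: "K \<subseteq> ?X" "\<forall>x\<in>K. \<forall>y\<in>K. x \<noteq> y \<longrightarrow> E x y"
        have "is_clique W E (insert v0 K)" unfolding is_clique_def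
          using K v0 symW by auto
        then have "card (insert v0 K) \<le> om W" using cl_le[OF W(1)] by blast
        moreover have "v0 \<notin> K" using K(1) irrW[OF v0] by auto
        moreover have "finite K" using K(1) finW by (auto intro: finite_subset)
        ultimately show "card K \<le> om W - 1" by simp
      qed
    qed
    moreover have "(om W - 1) * (om W - 1) + 2 * (om W - 1) < om W ^ 2"
      using om1 by (cases "om W") (auto simp: power2_eq_square)
    ultimately show False using deg v0 by fastforce
  qed
  then obtain x y z where xyz: "x \<in> W" "y \<in> W" "z \<in> W" "E v0 x" "E v0 y" "E v0 z"
    "x \<noteq> y" "y \<noteq> z" "x \<noteq> z" "\<not> E x y" "\<not> E y z" "\<not> E x z" by auto
  have P3: "P {x,y,z}" unfolding P_def using xyz v0 symW irrW by auto
  have "\<exists>S. P S \<and> (\<forall>S'. P S' \<longrightarrow> card S' \<le> card S)"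
  proof (rule Lattices_Big.ex_has_greatest_nat[of P "{x,y,z}" card "Suc (card W)"])
    show "P {x,y,z}" by (rule P3)
    show "\<forall>S. P S \<longrightarrow> card S < Suc (card W)"
    proof (intro allI impI)
      fix S assume "P S"
      then have "S \<subseteq> W" unfolding P_def by auto
      then have "card S \<le> card W" using finW by (rule card_mono[rotated])
      then show "card S < Suc (card W)" by simp
    qed
  qed
  then obtain S where PS: "P S" and Smax: "\<And>S'. P S' \<Longrightarrow> card S' \<le> card S" by blast
  have SW: "S \<subseteq> W" and Sind: "\<And>a b. a \<in> S \<Longrightarrow> b \<in> S \<Longrightarrow> \<not> E a b" using PS unfolding P_def by auto
  obtain v where v: "v \<in> W" "\<And>s. s \<in> S \<Longrightarrow> E v s" using PS unfolding P_def by auto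
  have finS: "finite S" using SW finW finite_subset by blast
  have S3: "3 \<le> card S" using Smax[OF P3] xyz by (simp add: card_insert_if)
  define C where "C = {c\<in>W. \<forall>s\<in>S. E c s}"
  define M where "M = {y\<in>W. y \<notin> C \<and> (\<exists>s\<in>S. E y s)}"
  define R where "R = W - S - C - M"
  have vC: "v \<in> C" unfolding C_def using v by auto
  have SC: "S \<inter> C = {}" unfolding C_def using irrW SW by fastforce
  have SM: "S \<inter> M = {}" unfolding M_def using Sind by auto
  have sW: "\<And>x y. x \<in> W \<Longrightarrow> y \<in> W \<Longrightarrow> E x y \<Longrightarrow> E y x" using symW by blast
  have nsW: "\<And>x y. x \<in> W \<Longrightarrow> y \<in> W \<Longrightarrow> \<not> E x y \<Longrightarrow> \<not> E y x" using symW by blast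
  have SV: "\<And>s. s \<in> S \<Longrightarrow> s \<in> V" using SW W by auto
  have CW: "C \<subseteq> W" and MW: "M \<subseteq> W" and RW: "R \<subseteq> W" unfolding C_def M_def R_def by auto
  have CM: "C \<inter> M = {}" unfolding M_def by auto
  have RD: "R \<inter> (S \<union> C \<union> M) = {}" unfolding R_def by auto
  have F1: "\<And>y c. y \<in> M \<Longrightarrow> c \<in> C \<Longrightarrow> E y c"
  proof (rule ccontr)
    fix y c assume yc: "y \<in> M" "c \<in> C" "\<not> E y c"
    obtain sa where sa: "sa \<in> S" "E y sa" using yc unfolding M_def by auto
    obtain sb where sb: "sb \<in> S" "\<not> E y sb" using yc unfolding M_def C_def by auto
    obtain sd where sd: "sd \<in> S" "sd \<noteq> sa" "sd \<noteq> sb" using three_other[OF finS S3] by blast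
    have yW: "y \<in> W" and cW: "c \<in> W" using yc unfolding M_def C_def by auto
    have cs: "\<And>s. s \<in> S \<Longrightarrow> E c s" using yc unfolding C_def by auto
    have sab: "sa \<noteq> sb" using sa sb by auto
    have ynS: "y \<notin> S" using yc SM by auto
    have cnS: "c \<notin> S" using yc SC by auto
    have cy: "c \<noteq> y" using yc CM by auto
    have ncy: "\<not> E c y" using nsW[OF yW cW yc(3)] .
    have Vs: "sa \<in> V" "sb \<in> V" "sd \<in> V" "c \<in> V" "y \<in> V" using SV sa sb sd cW yW W by auto
    have e1: "E c sa" "E c sb" "E c sd" using cs sa sb sd by auto
    have e2: "E sa y" using sW[OF yW _ sa(2)] sa SW by auto
    have e3: "E sd c" using sW[OF cW _ e1(3)] sd SW by auto
    have n1: "\<not> E sa sd" "\<not> E sa sb" "\<not> E sd sb" "\<not> E sb sd" "\<not> E sb sa" "\<not> E sd sa"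
      using Sind sa sb sd by auto
    have n2: "\<not> E sb y" using nsW[OF yW _ sb(2)] sb SW by auto
    have dist: "distinct [c, sa, y, sd, sb]" "distinct [c, sb, sd, y, sa]"
      using sab sd cy ynS cnS sa(1) sb(1) by auto
    show False
    proof (cases "E y sd")
      case True
      show False
        by (rule banner_False[of c sa y sd sb]) (use Vs dist e1 e2 e3 True ncy n1 n2 sb in simp_all)
    next
      case False
      have n3: "\<not> E sd y" using nsW[OF yW _ False] sd SW by auto
      show False
        by (rule fork_False[of c sb sd y sa]) (use Vs dist e1 e2 e3 n3 ncy n1 n2 in simp_all)
    qed
  qed
  have Rprop: "\<And>r. r \<in> R \<Longrightarrow> r \<in> W \<and> (\<forall>s\<in>S. \<not> E r s \<and> \<not> E s r)"
  proof -
    fix r assume r: "r \<in> R"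
    then have rW: "r \<in> W" "r \<notin> C" "r \<notin> M" unfolding R_def by auto
    then have a: "\<forall>s\<in>S. \<not> E r s" unfolding M_def by auto
    have "\<forall>s\<in>S. \<not> E s r"
    proof
      fix s assume "s \<in> S" then show "\<not> E s r" using nsW[OF rW(1), of s] a SW by auto
    qed
    then show "r \<in> W \<and> (\<forall>s\<in>S. \<not> E r s \<and> \<not> E s r)" using rW a by blast
  qed
  have F2: "\<And>c r. c \<in> C \<Longrightarrow> r \<in> R \<Longrightarrow> \<not> E c r"
  proof
    fix c r assume cr: "c \<in> C" "r \<in> R" "E c r"
    have rS: "r \<notin> S" using cr(2) unfolding R_def by auto
    have "P (insert r S)" unfolding P_def
    proof (intro conjI)
      show "insert r S \<subseteq> W" using SW Rprop[OF cr(2)] by auto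
      show "\<forall>x\<in>insert r S. \<forall>y\<in>insert r S. \<not> E x y"
        using Sind Rprop[OF cr(2)] irrW by auto
      show "\<exists>v\<in>W. \<forall>s\<in>insert r S. E v s" using cr unfolding C_def by auto
    qed
    then have "card (insert r S) \<le> card S" by (rule Smax)
    then show False using rS finS by simp
  qed
  show False
  proof (cases "R = {}")
    case True
    have "C \<subseteq> W \<and> C \<noteq> {} \<and> C \<noteq> W \<and> (\<forall>x\<in>C. \<forall>y\<in>W-C. E x y)"
    proof (intro conjI)
      show "C \<subseteq> W" unfolding C_def by auto
      show "C \<noteq> {}" using vC by auto
      have "S \<noteq> {}" using S3 by auto
      then obtain s where "s \<in> S" by blast
      then show "C \<noteq> W" using SC SW by blast
      show "\<forall>x\<in>C. \<forall>y\<in>W-C. E x y"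
      proof (intro ballI)
        fix x y assume xy: "x \<in> C" "y \<in> W - C"
        then have "y \<in> S \<or> y \<in> M" using True unfolding R_def by blast
        then show "E x y"
        proof
          assume "y \<in> S" then show ?thesis using xy unfolding C_def by blast
        next
          assume "y \<in> M" then have "E y x" using F1 xy by blast
          then show ?thesis using sW[of y x] xy CW by blast
        qed
      qed
    qed
    then have "\<exists>A. A \<subseteq> W \<and> A \<noteq> {} \<and> A \<noteq> W \<and> (\<forall>x\<in>A. \<forall>y\<in>W-A. E x y)" by (rule exI)
    then show False using nojoin by (rule notE[rotated])
  next
    case False
    have "\<not> (\<forall>x\<in>R. \<forall>y\<in>W-R. \<not> E x y)"
    proof
      assume a: "\<forall>x\<in>R. \<forall>y\<in>W-R. \<not> E x y"
      have "R \<subseteq> W" "R \<noteq> W" using RW vC v(1) RD by auto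
      then have "R \<subseteq> W \<and> R \<noteq> {} \<and> R \<noteq> W \<and> (\<forall>x\<in>R. \<forall>y\<in>W-R. \<not> E x y)" using a False by simp
      then have "\<exists>A. A \<subseteq> W \<and> A \<noteq> {} \<and> A \<noteq> W \<and> (\<forall>x\<in>A. \<forall>y\<in>W-A. \<not> E x y)" by (rule exI)
      then show False using nosplit by (rule notE[rotated])
    qed
    then obtain r p0 where rp: "r \<in> R" "p0 \<in> W - R" "E r p0" by blast
    have rW: "r \<in> W" and rS: "\<And>s. s \<in> S \<Longrightarrow> \<not> E r s \<and> \<not> E s r" using Rprop[OF rp(1)] by auto
    have rV: "r \<in> V" using rW W by auto
    have Nr: "\<And>x. x \<in> W \<Longrightarrow> E r x \<Longrightarrow> x \<in> M \<or> x \<in> R"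
    proof -
      fix x assume x: "x \<in> W" "E r x"
      have "x \<notin> S" using rS x by auto
      moreover have "x \<notin> C"
      proof
        assume "x \<in> C" then have "\<not> E x r" using F2 rp(1) by auto
        moreover have "E x r" using sW[OF rW x(1) x(2)] .
        ultimately show False by simp
      qed
      ultimately show "x \<in> M \<or> x \<in> R" using x unfolding R_def by auto
    qed
    have p0M: "p0 \<in> M" using Nr[of p0] rp by auto
    have vr: "\<not> E v r" "\<not> E r v" using F2[OF vC rp(1)] nsW[OF v(1) rW] by auto
    have vM: "\<And>p. p \<in> M \<Longrightarrow> E v p" using F1 vC sW v(1) MW by blast
    have RS: "\<And>q s. q \<in> R \<Longrightarrow> s \<in> S \<Longrightarrow> \<not> E q s \<and> \<not> E s q" using Rprop by blast
    have RC: "\<And>q c. q \<in> R \<Longrightarrow> c \<in> C \<Longrightarrow> \<not> E q c \<and> \<not> E c q"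
      using F2 nsW CW RW by blast
    have rVs: "\<And>x. x \<in> W \<Longrightarrow> x \<in> V" using W by auto
    have one_miss: "\<And>p. p \<in> M \<Longrightarrow> E r p \<Longrightarrow> \<exists>s0\<in>S. \<not> E p s0 \<and> (\<forall>s\<in>S. s \<noteq> s0 \<longrightarrow> E p s)"
    proof -
      fix p assume p: "p \<in> M" "E r p"
      obtain s0 where s0: "s0 \<in> S" "\<not> E p s0" using p unfolding M_def C_def by auto
      have pW: "p \<in> W" using p MW by auto
      have "\<forall>s\<in>S. s \<noteq> s0 \<longrightarrow> E p s"
      proof (intro ballI impI, rule ccontr)
        fix s' assume s': "s' \<in> S" "s' \<noteq> s0" "\<not> E p s'"
        have d: "distinct [v, s0, s', r, p]" using s' s0 vC p(1) rp(1) SC SM CM RD by auto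
        have e: "E v s0" "E v s'" "E v p" "E p r" using v s0 s' vM[OF p(1)] sW[OF rW pW p(2)] by auto
        have n: "\<not> E s0 s'" "\<not> E s0 r" "\<not> E s0 p" "\<not> E s' r" "\<not> E s' p"
          using Sind s0 s' RS[OF rp(1)] nsW[OF pW _ s0(2)] nsW[OF pW _ s'(3)] SW by auto
        show False
          by (rule fork_False[of v s0 s' r p]) (use d e n vr s0 s' rVs v(1) rW pW SW in auto)
      qed
      then show "\<exists>s0\<in>S. \<not> E p s0 \<and> (\<forall>s\<in>S. s \<noteq> s0 \<longrightarrow> E p s)" using s0 by auto
    qed
    have MV: "\<And>p. p \<in> M \<Longrightarrow> p \<in> W" using MW by auto
    have RWs: "\<And>q. q \<in> R \<Longrightarrow> q \<in> W" using RW by auto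
    have PQ: "\<And>p q. p \<in> M \<Longrightarrow> q \<in> R \<Longrightarrow> E r p \<Longrightarrow> E r q \<Longrightarrow> E p q"
    proof (rule ccontr)
      fix p q assume pq: "p \<in> M" "q \<in> R" "E r p" "E r q" "\<not> E p q"
      obtain sp where sp: "sp \<in> S" "\<not> E p sp" "\<forall>s\<in>S. s \<noteq> sp \<longrightarrow> E p s"
        using one_miss[OF pq(1,3)] by blast
      obtain s1 where s1: "s1 \<in> S" "s1 \<noteq> sp" using three_other[OF finS S3, of sp sp] by blast
      obtain s2 where s2: "s2 \<in> S" "s2 \<noteq> sp" "s2 \<noteq> s1" using three_other[OF finS S3, of sp s1] by blast
      have pW: "p \<in> W" and qW: "q \<in> W" using MV RWs pq by auto
      have qr: "q \<noteq> r" using pq(4) irrW[OF rW] by auto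
      have d: "distinct [p, s1, s2, q, r]" using qr pq(1,2) rp(1) s1 s2 SM RD by auto
      have e: "E p s1" "E p s2" "E p r" "E r q" using sp s1 s2 sW[OF rW pW pq(3)] pq(4) by auto
      have n: "\<not> E s1 s2" "\<not> E s1 q" "\<not> E s1 r" "\<not> E s2 q" "\<not> E s2 r"
        using Sind s1 s2 RS[OF pq(2)] RS[OF rp(1)] by auto
      show False
        by (rule fork_False[of p s1 s2 q r]) (use d e n pq(5) rVs pW qW rW s1 s2 SW in auto)
    qed
    have PP: "\<And>p p'. p \<in> M \<Longrightarrow> p' \<in> M \<Longrightarrow> E r p \<Longrightarrow> E r p' \<Longrightarrow> p \<noteq> p' \<Longrightarrow> E p p'"
    proof (rule ccontr)
      fix p p' assume pp: "p \<in> M" "p' \<in> M" "E r p" "E r p'" "p \<noteq> p'" "\<not> E p p'"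
      obtain sp where sp: "sp \<in> S" "\<not> E p sp" "\<forall>s\<in>S. s \<noteq> sp \<longrightarrow> E p s"
        using one_miss[OF pp(1,3)] by blast
      obtain sp' where sp': "sp' \<in> S" "\<not> E p' sp'" "\<forall>s\<in>S. s \<noteq> sp' \<longrightarrow> E p' s"
        using one_miss[OF pp(2,4)] by blast
      have pW: "p \<in> W" and p'W: "p' \<in> W" using MV pp by auto
      have Es: "E p r" "E p' r" using sW[OF rW pW pp(3)] sW[OF rW p'W pp(4)] by auto
      have np'p: "\<not> E p' p" using nsW[OF pW p'W pp(6)] .
      show False
      proof (cases "sp = sp'")
        case True
        have d: "distinct [v, p, r, p', sp]" using pp(1,2,5) vC rp(1) sp(1) SC SM CM RD by auto
        have e: "E v p" "E p r" "E r p'" "E p' v" "E v sp"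
          using vM[OF pp(1)] Es pp(4) sW[OF v(1) p'W vM[OF pp(2)]] v(2)[OF sp(1)] by auto
        have n: "\<not> E v r" "\<not> E p p'" "\<not> E p sp" "\<not> E r sp" "\<not> E p' sp"
          using vr pp(6) sp(2) RS[OF rp(1) sp(1)] sp'(2) True by auto
        show False
          by (rule banner_False[of v p r p' sp]) (use d e n rVs v(1) pW p'W rW sp(1) SW in auto)
      next
        case False
        obtain s where s: "s \<in> S" "s \<noteq> sp" "s \<noteq> sp'" using three_other[OF finS S3] by blast
        have d: "distinct [p', r, p, s, sp]" using pp(1,2,5) rp(1) sp(1) s SM RD by auto
        have e: "E p' r" "E r p" "E p s" "E s p'" "E p' sp"
          using Es pp(3) sp(1) sp(3) s sW[OF p'W _ ] sp'(3) False SW by auto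
        have n: "\<not> E p' p" "\<not> E r s" "\<not> E r sp" "\<not> E p sp" "\<not> E s sp"
          using np'p RS[OF rp(1)] s sp Sind by auto
        show False
          by (rule banner_False[of p' r p s sp]) (use d e n rVs pW p'W rW sp(1) s(1) SW in auto)
      qed
    qed
    obtain s0 where s0: "s0 \<in> S" "\<not> E p0 s0" "\<forall>s\<in>S. s \<noteq> s0 \<longrightarrow> E p0 s"
      using one_miss[OF p0M rp(3)] by blast
    have p0W: "p0 \<in> W" using p0M MV by auto
    have QQ: "\<And>q q'. q \<in> R \<Longrightarrow> q' \<in> R \<Longrightarrow> E r q \<Longrightarrow> E r q' \<Longrightarrow> q \<noteq> q' \<Longrightarrow> E q q'"
    proof (rule ccontr)
      fix q q' assume qq: "q \<in> R" "q' \<in> R" "E r q" "E r q'" "q \<noteq> q'" "\<not> E q q'"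
      have qW: "q \<in> W" and q'W: "q' \<in> W" using RWs qq by auto
      have d: "distinct [p0, q, q', s0, v]" using qq(1,2,5) p0M vC s0(1) SC SM CM RD by auto
      have e: "E p0 q" "E p0 q'" "E p0 v" "E v s0"
        using PQ[OF p0M qq(1) rp(3) qq(3)] PQ[OF p0M qq(2) rp(3) qq(4)] sW[OF v(1) p0W vM[OF p0M]] v(2)[OF s0(1)]
        by auto
      have n: "\<not> E p0 s0" "\<not> E q q'" "\<not> E q s0" "\<not> E q v" "\<not> E q' s0" "\<not> E q' v"
        using s0(2) qq(6) RS[OF qq(1) s0(1)] RS[OF qq(2) s0(1)] RC[OF qq(1) vC] RC[OF qq(2) vC] by auto
      show False
        by (rule fork_False[of p0 q q' s0 v]) (use d e n rVs v(1) p0W qW q'W s0(1) SW in auto)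
    qed
    define Nset where "Nset = {x\<in>W. E r x}"
    have finN: "finite Nset" unfolding Nset_def using finW by auto
    have rN: "r \<notin> Nset" unfolding Nset_def using irrW[OF rW] by auto
    have "is_clique W E (insert r Nset)" unfolding is_clique_def
    proof (intro conjI ballI impI)
      show "insert r Nset \<subseteq> W" using rW unfolding Nset_def by auto
      fix x y assume xy: "x \<in> insert r Nset" "y \<in> insert r Nset" "x \<noteq> y"
      show "E x y"
      proof (cases "x = r")
        case True then show ?thesis using xy unfolding Nset_def by auto
      next
        case xr: False
        then have x: "x \<in> W" "E r x" using xy unfolding Nset_def by auto
        show ?thesis
        proof (cases "y = r")
          case True then show ?thesis using sW[OF rW x(1) x(2)] by simp
        next
          case False
          then have y: "y \<in> W" "E r y" using xy unfolding Nset_def by auto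
          from Nr[OF x] Nr[OF y] show ?thesis
          proof (elim disjE)
            assume "x \<in> M" "y \<in> M" then show ?thesis using PP x y xy(3) by blast
          next
            assume "x \<in> M" "y \<in> R" then show ?thesis using PQ x y by blast
          next
            assume a: "x \<in> R" "y \<in> M"
            then have "E y x" using PQ x y by blast
            then show ?thesis using sW[OF y(1) x(1)] by blast
          next
            assume "x \<in> R" "y \<in> R" then show ?thesis using QQ x y xy(3) by blast
          qed
        qed
      qed
    qed
    then have "card (insert r Nset) \<le> om W" using cl_le[OF W(1)] by blast
    then have "card Nset < om W" using finN rN by simp
    moreover have "om W \<le> om W ^ 2" using om1 by (simp add: power2_eq_square)
    moreover have "om W ^ 2 \<le> card Nset" using deg rW unfolding Nset_def by blast
    ultimately show False by simp
  qed
qed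

lemma pc_mono: "proper_colouring W E k c \<Longrightarrow> k \<le> k' \<Longrightarrow> proper_colouring W E k' c"
  unfolding proper_colouring_def by auto

lemma colour: "W \<subseteq> V \<Longrightarrow> \<exists>c. proper_colouring W E (om W ^ 2) c"
proof (induction "card W" arbitrary: W rule: less_induct)
  case less
  have WV: "W \<subseteq> V" by (rule less.prems)
  have finW: "finite W" using WV fin finite_subset by blast
  have sW: "\<And>x y. x \<in> W \<Longrightarrow> y \<in> W \<Longrightarrow> E x y \<Longrightarrow> E y x" using sym WV by blast
  have irrW: "\<And>x. x \<in> W \<Longrightarrow> \<not> E x x" using irr WV by auto
  have IH: "\<And>W'. W' \<subset> W \<Longrightarrow> \<exists>c. proper_colouring W' E (om W' ^ 2) c"
  proof -
    fix W' assume "W' \<subset> W"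
    then have "card W' < card W" "W' \<subseteq> V" using finW psubset_card_mono WV by auto
    then show "\<exists>c. proper_colouring W' E (om W' ^ 2) c" using less.hyps by blast
  qed
  have omsub: "\<And>W'. W' \<subseteq> W \<Longrightarrow> om W' ^ 2 \<le> om W ^ 2"
    using om_mono WV by (simp add: power_mono)
  show ?case
  proof (cases "W = {}")
    case True then show ?thesis by (auto simp: proper_colouring_def)
  next
    case Wne: False
    show ?thesis
    proof (cases "\<exists>v\<in>W. card {y\<in>W. E v y} < om W ^ 2")
      case True
      then obtain v where v: "v \<in> W" "card {y\<in>W. E v y} < om W ^ 2" by blast
      define N where "N = {y\<in>W. E v y}"
      obtain c where c: "proper_colouring (W - {v}) E (om (W - {v}) ^ 2) c"
        using IH[of "W - {v}"] v by blast
      have c': "proper_colouring (W - {v}) E (om W ^ 2) c"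
        using pc_mono[OF c omsub[of "W - {v}"]] by auto
      have "\<not> {..<om W ^ 2} \<subseteq> c ` N"
      proof
        assume "{..<om W ^ 2} \<subseteq> c ` N"
        then have "card {..<om W ^ 2} \<le> card (c ` N)" using finW unfolding N_def by (intro card_mono) auto
        also have "\<dots> \<le> card N" using finW unfolding N_def by (intro card_image_le) auto
        finally show False using v(2) unfolding N_def by simp
      qed
      then obtain j where j: "j < om W ^ 2" "j \<notin> c ` N" by auto
      define c2 where "c2 = c(v := j)"
      have "proper_colouring W E (om W ^ 2) c2"
        unfolding proper_colouring_def
      proof (intro conjI ballI impI)
        fix x assume "x \<in> W"
        then show "c2 x < om W ^ 2" using j c' unfolding c2_def proper_colouring_def by auto
      next
        fix x y assume xy: "x \<in> W" "y \<in> W" "E x y"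
        show "c2 x \<noteq> c2 y"
        proof (cases "x = v")
          case True
          then have "y \<noteq> v" using xy irrW by auto
          moreover have "y \<in> N" using xy True unfolding N_def by auto
          ultimately show ?thesis using True j unfolding c2_def by auto
        next
          case xv: False
          show ?thesis
          proof (cases "y = v")
            case True
            have "x \<in> N" using sW[OF xy] True xy unfolding N_def by auto
            then show ?thesis using True xv j unfolding c2_def by auto
          next
            case False
            then show ?thesis using xv xy c' unfolding c2_def proper_colouring_def by auto
          qed
        qed
      qed
      then show ?thesis by blast
    next
      case nodeg: False
      show ?thesis
      proof (cases "\<exists>A. A \<subseteq> W \<and> A \<noteq> {} \<and> A \<noteq> W \<and> (\<forall>x\<in>A. \<forall>y\<in>W-A. \<not> E x y)")
        case True
        then obtain A where A: "A \<subseteq> W" "A \<noteq> {}" "A \<noteq> W" "\<forall>x\<in>A. \<forall>y\<in>W-A. \<not> E x y" by blast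
        obtain cA where cA: "proper_colouring A E (om W ^ 2) cA"
          using IH[of A] A pc_mono omsub[of A] by blast
        obtain cB where cB: "proper_colouring (W - A) E (om W ^ 2) cB"
          using IH[of "W - A"] A pc_mono omsub[of "W - A"] by blast
        define c where "c = (\<lambda>x. if x \<in> A then cA x else cB x)"
        have "proper_colouring W E (om W ^ 2) c"
          unfolding proper_colouring_def
        proof (intro conjI ballI impI)
          fix x assume "x \<in> W"
          then show "c x < om W ^ 2" using cA cB unfolding c_def proper_colouring_def by auto
        next
          fix x y assume xy: "x \<in> W" "y \<in> W" "E x y"
          show "c x \<noteq> c y"
          proof (cases "x \<in> A")
            case True
            then have "y \<in> A" using A(4) xy by blast
            then show ?thesis using True xy cA unfolding c_def proper_colouring_def by auto
          next
            case False
            then have "y \<notin> A" using A(4) xy sW[OF xy] by blast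
            then show ?thesis using False xy cB unfolding c_def proper_colouring_def by auto
          qed
        qed
        then show ?thesis by blast
      next
        case nosplit: False
        show ?thesis
        proof (cases "\<exists>A. A \<subseteq> W \<and> A \<noteq> {} \<and> A \<noteq> W \<and> (\<forall>x\<in>A. \<forall>y\<in>W-A. E x y)")
          case True
          then obtain A where A: "A \<subseteq> W" "A \<noteq> {}" "A \<noteq> W" "\<forall>x\<in>A. \<forall>y\<in>W-A. E x y" by blast
          define B where "B = W - A"
          have BW: "B \<subseteq> W" unfolding B_def by auto
          obtain cA where cA: "proper_colouring A E (om A ^ 2) cA" using IH[of A] A by blast
          obtain cB where cB: "proper_colouring B E (om B ^ 2) cB" using IH[of B] A unfolding B_def by blast
          obtain KA where KA: "is_clique A E KA" "card KA = om A" using cl_ex A(1) WV by blast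
          obtain KB where KB: "is_clique B E KB" "card KB = om B" using cl_ex BW WV by blast
          have "is_clique W E (KA \<union> KB)" unfolding is_clique_def
          proof (intro conjI ballI impI)
            show "KA \<union> KB \<subseteq> W" using KA KB A(1) BW unfolding is_clique_def by auto
          next
            fix x y assume xy: "x \<in> KA \<union> KB" "y \<in> KA \<union> KB" "x \<noteq> y"
            have sub: "KA \<subseteq> A" "KB \<subseteq> B" using KA KB unfolding is_clique_def by auto
            show "E x y"
            proof (cases "x \<in> KA")
              case xa: True
              show ?thesis
              proof (cases "y \<in> KA")
                case True then show ?thesis using KA xa xy unfolding is_clique_def by auto
              next
                case False
                then have "y \<in> B" using xy sub by auto
                then show ?thesis using A(4) xa sub unfolding B_def by auto
              qed
            next
              case xb: False
              then have xB: "x \<in> KB" using xy by auto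
              show ?thesis
              proof (cases "y \<in> KB")
                case True then show ?thesis using KB xB xy unfolding is_clique_def by auto
              next
                case False
                then have yA: "y \<in> A" using xy sub by auto
                then have "E y x" using A(4) xB sub unfolding B_def by auto
                then show ?thesis using sW[of y x] yA xB sub A(1) BW by auto
              qed
            qed
          qed
          then have "card (KA \<union> KB) \<le> om W" using cl_le WV by blast
          moreover have "KA \<inter> KB = {}" using KA KB unfolding is_clique_def B_def by auto
          moreover have "finite KA" "finite KB" using KA(1) KB(1) finW A(1) BW unfolding is_clique_def
            by (meson finite_subset)+
          ultimately have sumle: "om A + om B \<le> om W" using KA KB by (simp add: card_Un_disjoint)
          then have sq: "om A ^ 2 + om B ^ 2 \<le> om W ^ 2"
          proof -
            have "om A ^ 2 + om B ^ 2 \<le> (om A + om B) ^ 2" by (simp add: power2_sum)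
            also have "\<dots> \<le> om W ^ 2" using sumle by (simp add: power_mono)
            finally show ?thesis .
          qed
          define c where "c = (\<lambda>x. if x \<in> A then cA x else om A ^ 2 + cB x)"
          have "proper_colouring W E (om W ^ 2) c"
            unfolding proper_colouring_def
          proof (intro conjI ballI impI)
            fix x assume x: "x \<in> W"
            show "c x < om W ^ 2"
            proof (cases "x \<in> A")
              case True then show ?thesis using cA sq unfolding c_def proper_colouring_def by fastforce
            next
              case False then have "x \<in> B" using x unfolding B_def by auto
              then have "cB x < om B ^ 2" using cB unfolding proper_colouring_def by auto
              then show ?thesis using False sq unfolding c_def by auto
            qed
          next
            fix x y assume xy: "x \<in> W" "y \<in> W" "E x y"
            show "c x \<noteq> c y"
            proof (cases "x \<in> A")
              case xa: True
              have cax: "cA x < om A ^ 2" using cA xa unfolding proper_colouring_def by auto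
              show ?thesis
              proof (cases "y \<in> A")
                case True then show ?thesis using xa xy cA unfolding c_def proper_colouring_def by auto
              next
                case False then show ?thesis using xa cax unfolding c_def by auto
              qed
            next
              case xb: False
              show ?thesis
              proof (cases "y \<in> A")
                case True
                have "cA y < om A ^ 2" using cA True unfolding proper_colouring_def by auto
                then show ?thesis using xb True unfolding c_def by auto
              next
                case False
                then have "x \<in> B" "y \<in> B" using xy xb unfolding B_def by auto
                then show ?thesis using xb False xy cB unfolding c_def proper_colouring_def by auto
              qed
            qed
          qed
          then show ?thesis by blast
        next
          case nojoin: False
          have deg: "\<forall>v\<in>W. om W ^ 2 \<le> card {y\<in>W. E v y}" using nodeg by (auto simp: not_less)
          have False by (rule struct_lemma[OF WV Wne deg nosplit nojoin])
          then show ?thesis ..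
        qed
      qed
    qed
  qed
qed

end

theorem corollary3p15:
  fixes V :: "'a set" and E :: "'a \<Rightarrow> 'a \<Rightarrow> bool"
  assumes "simple_graph V E"
    and "H_free small_vertices fork_edges V E"
    and "H_free small_vertices banner_edges V E"
  shows "chromatic_number V E \<le> (clique_number V E)^2"
proof -
  interpret fb V E
    using assms unfolding simple_graph_def by unfold_locales auto
  obtain c where "proper_colouring V E ((clique_number V E)^2) c" using colour by blast
  then have "\<exists>c. proper_colouring V E ((clique_number V E)^2) c" by blast
  then show ?thesis unfolding chromatic_number_def by (rule Least_le)
qed

end
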